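(* Let $X$ be an exponential vector space over a field $K$ such that $X\smallsetminus X_0$ has a basis and $\dim X=[\alpha:\beta]$. Let $\gamma,\delta$ be cardinal numbers with $\gamma\leq\alpha$ and $\delta\leq\beta$. Then there exists a sub exponential vector space $Y$ of $X$ with $\dim Y=[\gamma:\delta]$ (in particular $Y\smallsetminus Y_0$ has a basis).
   Context: An exponential vector space (evs) over a field $K$ is a partially ordered set $(X,\leq)$ with a binary operation $+$ on $X$ and a map $K\times X\to X$, $(\alpha,x)\mapsto \alpha x$, such that: (A1) $(X,+)$ is a commutative semigroup with identity $\theta$; (A2) $x\leq y$ implies $x+z\leq y+z$ and $\alpha x\leq \alpha y$ for all $z\in X$, $\alpha\in K$; (A3) $\alpha(x+y)=\alpha x+\alpha y$, $\alpha(\beta x)=(\alpha\beta)x$, $(\alpha+\beta)x\leq \alpha x+\beta x$, $1x=x$; (A4) $\alpha x=\theta$ iff $\alpha=0$ or $x=\theta$; (A5) $x+(-1)x=\theta$ iff $x\in X_0$, where $X_0:=\{z\in X: y\not\leq z \text{ for all } y\in X\smallsetminus\{z\}\}$ (the set of minimal elements, called the primitive space; it is a vector space over $K$); (A6) for each $x\in X$ there is $p\in X_0$ with $p\leq x$. A subset $Y\subseteq X$ is a sub exponential vector space (subevs) if $Y$ is itself an evs under the restricted operations and order; its primitive space $Y_0$ is the set of minimal elements of $Y$. For $x\in X\smallsetminus X_0$ let $L(x):=\{z\in X: z\geq \alpha x+p \text{ for some } \alpha\in K\smallsetminus\{0\},\ p\in X_0\}$ (for a subevs, testing sets are computed inside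 $Y$ using $Y_0$). A subset $B\subseteq X\smallsetminus X_0$ generates $X\smallsetminus X_0$ if $X\smallsetminus X_0=\bigcup_{b\in B}L(b)$. Elements $x,y\in X\smallsetminus X_0$ are orderly dependent if $x\in L(y)$ or $y\in L(x)$, and orderly independent otherwise; $B$ is orderly independent if any two distinct members are orderly independent. A basis of $X\smallsetminus X_0$ is an orderly independent generating subset. All bases of $X\smallsetminus X_0$ have the same cardinality, denoted $\dim(X\smallsetminus X_0)$; $\dim X_0$ is the vector-space dimension of $X_0$ (taken as $0$ if $X_0=\{\theta\}$), and $\dim X:=[\dim(X\smallsetminus X_0):\dim X_0]$. *)

theory Defs
  imports Main "HOL-Library.Equipollence"
begin

definition prim :: "'x set \<Rightarrow> ('x \<Rightarrow> 'x \<Rightarrow> bool) \<Rightarrow> 'x set" where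
  "prim X le = {z \<in> X. \<forall>y \<in> X - {z}. \<not> le y z}"

definition evs :: "'x set \<Rightarrow> ('x \<Rightarrow> 'x \<Rightarrow> bool) \<Rightarrow> ('x \<Rightarrow> 'x \<Rightarrow> 'x)
    \<Rightarrow> ('k::field \<Rightarrow> 'x \<Rightarrow> 'x) \<Rightarrow> 'x \<Rightarrow> bool" where
  "evs X le add smult th \<longleftrightarrow>
     \<comment> \<open>closure of the operations and partial order on X\<close>
     th \<in> X \<and>
     (\<forall>x\<in>X. \<forall>y\<in>X. add x y \<in> X) \<and>
     (\<forall>a. \<forall>x\<in>X. smult a x \<in> X) \<and>
     (\<forall>x\<in>X. le x x) \<and>
     (\<forall>x\<in>X. \<forall>y\<in>X. le x y \<and> le y x \<longrightarrow> x = y) \<and>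
     (\<forall>x\<in>X. \<forall>y\<in>X. \<forall>z\<in>X. le x y \<and> le y z \<longrightarrow> le x z) \<and>
     \<comment> \<open>(A1)\<close>
     (\<forall>x\<in>X. \<forall>y\<in>X. \<forall>z\<in>X. add (add x y) z = add x (add y z)) \<and>
     (\<forall>x\<in>X. \<forall>y\<in>X. add x y = add y x) \<and>
     (\<forall>x\<in>X. add x th = x) \<and>
     \<comment> \<open>(A2)\<close>
     (\<forall>x\<in>X. \<forall>y\<in>X. le x y \<longrightarrow> (\<forall>z\<in>X. le (add x z) (add y z)) \<and> (\<forall>a. le (smult a x) (smult a y))) \<and>
     \<comment> \<open>(A3)\<close>
     (\<forall>a. \<forall>x\<in>X. \<forall>y\<in>X. smult a (add x y) = add (smult a x) (smult a y)) \<and>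
     (\<forall>a b. \<forall>x\<in>X. smult a (smult b x) = smult (a * b) x) \<and>
     (\<forall>a b. \<forall>x\<in>X. le (smult (a + b) x) (add (smult a x) (smult b x))) \<and>
     (\<forall>x\<in>X. smult 1 x = x) \<and>
     \<comment> \<open>(A4)\<close>
     (\<forall>a. \<forall>x\<in>X. smult a x = th \<longleftrightarrow> a = 0 \<or> x = th) \<and>
     \<comment> \<open>(A5)\<close>
     (\<forall>x\<in>X. add x (smult (-1) x) = th \<longleftrightarrow> x \<in> prim X le) \<and>
     \<comment> \<open>(A6)\<close>
     (\<forall>x\<in>X. \<exists>p\<in>prim X le. le p x)"

definition subevs :: "'x set \<Rightarrow> 'x set \<Rightarrow> ('x \<Rightarrow> 'x \<Rightarrow> bool) \<Rightarrow> ('x \<Rightarrow> 'x \<Rightarrow> 'x)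
    \<Rightarrow> ('k::field \<Rightarrow> 'x \<Rightarrow> 'x) \<Rightarrow> bool" where
  "subevs Y X le add smult \<longleftrightarrow> Y \<subseteq> X \<and> (\<exists>e. evs Y le add smult e)"

definition Lset :: "'x set \<Rightarrow> ('x \<Rightarrow> 'x \<Rightarrow> bool) \<Rightarrow> ('x \<Rightarrow> 'x \<Rightarrow> 'x)
    \<Rightarrow> ('k::field \<Rightarrow> 'x \<Rightarrow> 'x) \<Rightarrow> 'x \<Rightarrow> 'x set" where
  "Lset X le add smult x =
     {z \<in> X. \<exists>a p. a \<noteq> 0 \<and> p \<in> prim X le \<and> le (add (smult a x) p) z}"

definition orderly_basis :: "'x set \<Rightarrow> ('x \<Rightarrow> 'x \<Rightarrow> bool) \<Rightarrow> ('x \<Rightarrow> 'x \<Rightarrow> 'x)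
    \<Rightarrow> ('k::field \<Rightarrow> 'x \<Rightarrow> 'x) \<Rightarrow> 'x set \<Rightarrow> bool" where
  "orderly_basis X le add smult B \<longleftrightarrow>
     B \<subseteq> X - prim X le \<and>
     X - prim X le = (\<Union>b\<in>B. Lset X le add smult b) \<and>
     (\<forall>x\<in>B. \<forall>y\<in>B. x \<noteq> y \<longrightarrow>
        x \<notin> Lset X le add smult y \<and> y \<notin> Lset X le add smult x)"

inductive_set lspan :: "('x \<Rightarrow> 'x \<Rightarrow> 'x) \<Rightarrow> ('k \<Rightarrow> 'x \<Rightarrow> 'x) \<Rightarrow> 'x \<Rightarrow> 'x set \<Rightarrow> 'x set"
  for add smult th H where
    zero: "th \<in> lspan add smult th H"
  | base: "h \<in> H \<Longrightarrow> h \<in> lspan add smult th H"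
  | plus: "x \<in> lspan add smult th H \<Longrightarrow> y \<in> lspan add smult th H \<Longrightarrow> add x y \<in> lspan add smult th H"
  | scale: "x \<in> lspan add smult th H \<Longrightarrow> smult a x \<in> lspan add smult th H"

definition hamel_basis :: "'x set \<Rightarrow> ('x \<Rightarrow> 'x \<Rightarrow> 'x) \<Rightarrow> ('k \<Rightarrow> 'x \<Rightarrow> 'x) \<Rightarrow> 'x \<Rightarrow> 'x set \<Rightarrow> bool" where
  "hamel_basis V add smult th H \<longleftrightarrow>
     H \<subseteq> V \<and> lspan add smult th H = V \<and>
     (\<forall>h\<in>H. h \<notin> lspan add smult th (H - {h}))"

end

theory Submission
  imports Defs
begin

lemma lspan_mono: "A \<subseteq> C \<Longrightarrow> lspan add smult th A \<subseteq> lspan add smult th C"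
proof
  fix x assume h: "A \<subseteq> C" and "x \<in> lspan add smult th A"
  from this(2) show "x \<in> lspan add smult th C" using h
    by (induction rule: lspan.induct) (auto intro: lspan.intros)
qed

locale evsL =
  fixes X :: "'x set" and le :: "'x \<Rightarrow> 'x \<Rightarrow> bool" and add :: "'x \<Rightarrow> 'x \<Rightarrow> 'x"
    and smult :: "'k::field \<Rightarrow> 'x \<Rightarrow> 'x" and th :: 'x
  assumes E: "evs X le add smult th"
begin

lemma EE: "th \<in> X"
     "(\<forall>x\<in>X. \<forall>y\<in>X. add x y \<in> X)"
     "(\<forall>a. \<forall>x\<in>X. smult a x \<in> X)"
     "(\<forall>x\<in>X. le x x)"
     "(\<forall>x\<in>X. \<forall>y\<in>X. le x y \<and> le y x \<longrightarrow> x = y)"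
     "(\<forall>x\<in>X. \<forall>y\<in>X. \<forall>z\<in>X. le x y \<and> le y z \<longrightarrow> le x z)"
     "(\<forall>x\<in>X. \<forall>y\<in>X. \<forall>z\<in>X. add (add x y) z = add x (add y z))"
     "(\<forall>x\<in>X. \<forall>y\<in>X. add x y = add y x)"
     "(\<forall>x\<in>X. add x th = x)"
     "(\<forall>x\<in>X. \<forall>y\<in>X. le x y \<longrightarrow> (\<forall>z\<in>X. le (add x z) (add y z)) \<and> (\<forall>a. le (smult a x) (smult a y)))"
     "(\<forall>a. \<forall>x\<in>X. \<forall>y\<in>X. smult a (add x y) = add (smult a x) (smult a y))"
     "(\<forall>a b. \<forall>x\<in>X. smult a (smult b x) = smult (a * b) x)"
     "(\<forall>a b. \<forall>x\<in>X. le (smult (a + b) x) (add (smult a x) (smult b x)))"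
     "(\<forall>x\<in>X. smult 1 x = x)"
     "(\<forall>a. \<forall>x\<in>X. smult a x = th \<longleftrightarrow> a = 0 \<or> x = th)"
     "(\<forall>x\<in>X. add x (smult (-1) x) = th \<longleftrightarrow> x \<in> prim X le)"
     "(\<forall>x\<in>X. \<exists>p\<in>prim X le. le p x)"
  using E unfolding evs_def apply -
  by (elim conjE; assumption)+

lemma th_in: "th \<in> X" using EE(1) by blast
lemma add_in: "x \<in> X \<Longrightarrow> y \<in> X \<Longrightarrow> add x y \<in> X" using EE(2) by blast
lemma sm_in: "x \<in> X \<Longrightarrow> smult a x \<in> X" using EE(3) by blast
lemma refl: "x \<in> X \<Longrightarrow> le x x" using EE(4) by blast
lemma trans: "x \<in> X \<Longrightarrow> y \<in> X \<Longrightarrow> z \<in> X \<Longrightarrow> le x y \<Longrightarrow> le y z \<Longrightarrow> le x z"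
  using EE(6) by blast
lemma assoc: "x \<in> X \<Longrightarrow> y \<in> X \<Longrightarrow> z \<in> X \<Longrightarrow> add (add x y) z = add x (add y z)"
  using EE(7) by simp
lemma comm: "x \<in> X \<Longrightarrow> y \<in> X \<Longrightarrow> add x y = add y x" using EE(8) by blast
lemma idr: "x \<in> X \<Longrightarrow> add x th = x" using EE(9) by blast
lemma idl: "x \<in> X \<Longrightarrow> add th x = x" using comm idr th_in by metis
lemma mono_add: "x \<in> X \<Longrightarrow> y \<in> X \<Longrightarrow> z \<in> X \<Longrightarrow> le x y \<Longrightarrow> le (add x z) (add y z)"
  using EE(10) by blast
lemma mono_sm: "x \<in> X \<Longrightarrow> y \<in> X \<Longrightarrow> le x y \<Longrightarrow> le (smult a x) (smult a y)"
  using EE(10) by blast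
lemma sm_add: "x \<in> X \<Longrightarrow> y \<in> X \<Longrightarrow> smult a (add x y) = add (smult a x) (smult a y)"
  using EE(11) by simp
lemma sm_sm: "x \<in> X \<Longrightarrow> smult a (smult b x) = smult (a * b) x"
  using EE(12) by simp
lemma sm_one: "x \<in> X \<Longrightarrow> smult 1 x = x" using EE(14) by blast
lemma sm_th_iff: "x \<in> X \<Longrightarrow> smult a x = th \<longleftrightarrow> a = 0 \<or> x = th"
  using EE(15) by blast
lemma A5: "x \<in> X \<Longrightarrow> add x (smult (-1) x) = th \<longleftrightarrow> x \<in> prim X le"
  using EE(16) by blast
lemma A6: "x \<in> X \<Longrightarrow> \<exists>p\<in>prim X le. le p x"
  using EE(17) by blast

lemma prim_sub: "prim X le \<subseteq> X" unfolding prim_def by blast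
lemma minimal: "p \<in> prim X le \<Longrightarrow> y \<in> X \<Longrightarrow> le y p \<Longrightarrow> y = p"
  unfolding prim_def by blast

lemma sw4: "a \<in> X \<Longrightarrow> b \<in> X \<Longrightarrow> c \<in> X \<Longrightarrow> d \<in> X \<Longrightarrow>
   add (add a b) (add c d) = add (add a c) (add b d)"
  by (metis assoc comm add_in)

lemma neg_cancel: "p \<in> prim X le \<Longrightarrow> add p (smult (-1) p) = th"
  using A5 prim_sub by blast
lemma neg_cancel2: "p \<in> prim X le \<Longrightarrow> add (smult (-1) p) p = th"
  using neg_cancel comm prim_sub sm_in by (metis subsetD)

lemma prim_add: assumes "p \<in> prim X le" "q \<in> prim X le" shows "add p q \<in> prim X le"
proof -
  have X: "p \<in> X" "q \<in> X" using assms prim_sub by auto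
  have "add (add p q) (smult (-1) (add p q)) = add (add p (smult (-1) p)) (add q (smult (-1) q))"
    using X by (simp add: sm_add sw4 sm_in)
  also have "\<dots> = th" using assms neg_cancel idr th_in by simp
  finally show ?thesis using A5 add_in X by blast
qed

lemma prim_sm: assumes "p \<in> prim X le" shows "smult a p \<in> prim X le"
proof -
  have X: "p \<in> X" using assms prim_sub by auto
  have "smult (-1) (smult a p) = smult a (smult (-1) p)" using X by (simp add: sm_sm)
  hence "add (smult a p) (smult (-1) (smult a p)) = smult a (add p (smult (-1) p))"
    using X by (simp add: sm_add sm_in)
  also have "\<dots> = th" using assms neg_cancel sm_th_iff th_in by simp
  finally show ?thesis using A5 sm_in X by blast
qed

lemma th_prim: "th \<in> prim X le"
proof -
  have "smult (-1) th = th" using sm_th_iff th_in by blast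
  hence "add th (smult (-1) th) = th" using idr th_in by simp
  thus ?thesis using A5 th_in by blast
qed

lemma lspan_sub: "A \<subseteq> X \<Longrightarrow> lspan add smult th A \<subseteq> X"
proof
  fix x assume h: "A \<subseteq> X" and "x \<in> lspan add smult th A"
  from this(2) show "x \<in> X" using h by (induction rule: lspan.induct) (auto simp: th_in add_in sm_in)
qed

lemma lspan_prim: "A \<subseteq> prim X le \<Longrightarrow> lspan add smult th A \<subseteq> prim X le"
proof
  fix x assume h: "A \<subseteq> prim X le" and "x \<in> lspan add smult th A"
  from this(2) show "x \<in> prim X le" using h
    by (induction rule: lspan.induct) (auto simp: prim_add prim_sm th_prim)
qed


lemma antisym: "x \<in> X \<Longrightarrow> y \<in> X \<Longrightarrow> le x y \<Longrightarrow> le y x \<Longrightarrow> x = y"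
  using EE(5) by blast
lemma distr: "x \<in> X \<Longrightarrow> le (smult (a + b) x) (add (smult a x) (smult b x))"
  using EE(13) by blast

lemma sub_evs:
  assumes YX: "Y \<subseteq> X" and thY: "th \<in> Y"
    and addY: "\<And>x y. x \<in> Y \<Longrightarrow> y \<in> Y \<Longrightarrow> add x y \<in> Y"
    and smY: "\<And>a x. x \<in> Y \<Longrightarrow> smult a x \<in> Y"
    and A5Y: "\<And>x. x \<in> Y \<Longrightarrow> add x (smult (-1) x) = th \<longleftrightarrow> x \<in> prim Y le"
    and A6Y: "\<And>x. x \<in> Y \<Longrightarrow> \<exists>p\<in>prim Y le. le p x"
  shows "evs Y le add smult th"
  unfolding evs_def
proof (intro conjI)
  show "th \<in> Y" by fact
  show "\<forall>x\<in>Y. \<forall>y\<in>Y. add x y \<in> Y" using addY by blast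
  show "\<forall>a. \<forall>x\<in>Y. smult a x \<in> Y" using smY by blast
  show "\<forall>x\<in>Y. le x x" using refl YX by blast
  show "\<forall>x\<in>Y. \<forall>y\<in>Y. le x y \<and> le y x \<longrightarrow> x = y" using antisym YX by blast
  show "\<forall>x\<in>Y. \<forall>y\<in>Y. \<forall>z\<in>Y. le x y \<and> le y z \<longrightarrow> le x z" using trans YX by blast
  show "\<forall>x\<in>Y. \<forall>y\<in>Y. \<forall>z\<in>Y. add (add x y) z = add x (add y z)" using assoc YX by blast
  show "\<forall>x\<in>Y. \<forall>y\<in>Y. add x y = add y x" using comm YX by blast
  show "\<forall>x\<in>Y. add x th = x" using idr YX by blast
  show "\<forall>x\<in>Y. \<forall>y\<in>Y. le x y \<longrightarrow> (\<forall>z\<in>Y. le (add x z) (add y z)) \<and> (\<forall>a. le (smult a x) (smult a y))"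
    using mono_add mono_sm YX by blast
  show "\<forall>a. \<forall>x\<in>Y. \<forall>y\<in>Y. smult a (add x y) = add (smult a x) (smult a y)" using sm_add YX by blast
  show "\<forall>a b. \<forall>x\<in>Y. smult a (smult b x) = smult (a * b) x" using sm_sm YX by blast
  show "\<forall>a b. \<forall>x\<in>Y. le (smult (a + b) x) (add (smult a x) (smult b x))" using distr YX by blast
  show "\<forall>x\<in>Y. smult 1 x = x" using sm_one YX by blast
  show "\<forall>a. \<forall>x\<in>Y. smult a x = th \<longleftrightarrow> a = 0 \<or> x = th" using sm_th_iff YX by blast
  show "\<forall>x\<in>Y. add x (smult (-1) x) = th \<longleftrightarrow> x \<in> prim Y le" using A5Y by blast
  show "\<forall>x\<in>Y. \<exists>p\<in>prim Y le. le p x" using A6Y by blast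
qed

lemma construct:
  fixes B G' D' H :: "'x set"
  assumes OB: "orderly_basis X le add smult B"
    and HB: "hamel_basis (prim X le) add smult th H"
    and GB: "G' \<subseteq> B" and DH: "D' \<subseteq> H"
  shows "\<exists>Y. subevs Y X le add smult \<and>
           (\<exists>B'. orderly_basis Y le add smult B' \<and> B' \<approx> G') \<and>
           hamel_basis (prim Y le) add smult th D'"
proof -
  let ?P = "prim X le"
  define q where "q g = (SOME p. p \<in> ?P \<and> le p g)" for g
  have q: "q g \<in> ?P" "le (q g) g" if "g \<in> X" for g
    using someI_ex[OF A6[OF that, unfolded Bex_def]] unfolding q_def by auto
  have qX: "q g \<in> X" if "g \<in> X" for g using q(1)[OF that] prim_sub by blast
  define c where "c g = add g (smult (-1) (q g))" for g
  define Z where "Z = c ` G'"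
  define V where "V = lspan add smult th D'"
  define S where "S = lspan add smult th Z"
  define Y where "Y = {add s v | s v. s \<in> S \<and> v \<in> V}"
  have BX: "B \<subseteq> X - ?P" using OB unfolding orderly_basis_def by blast
  have HP: "H \<subseteq> ?P" "lspan add smult th H = ?P" using HB unfolding hamel_basis_def by auto
  have VP: "V \<subseteq> ?P" unfolding V_def using lspan_prim DH HP by blast
  have VX: "V \<subseteq> X" using VP prim_sub by blast
  have G'X: "G' \<subseteq> X" using GB BX by blast
  have cX: "c g \<in> X" if "g \<in> X" for g using that qX unfolding c_def by (simp add: add_in sm_in)
  have c_ge: "le th (c g)" if "g \<in> X" for g
  proof -
    have "le (add (q g) (smult (-1) (q g))) (add g (smult (-1) (q g)))"
      using mono_add q[OF that] that qX sm_in by blast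
    thus ?thesis using neg_cancel q[OF that] unfolding c_def by simp
  qed
  have c_back: "add (c g) (q g) = g" if "g \<in> X" for g
  proof -
    have "add (c g) (q g) = add g (add (smult (-1) (q g)) (q g))"
      unfolding c_def using assoc that qX sm_in by simp
    also have "\<dots> = g" using neg_cancel2 q[OF that] idr that by simp
    finally show ?thesis .
  qed
  have ZX: "Z \<subseteq> X" using cX G'X Z_def by blast
  have SX: "S \<subseteq> X" unfolding S_def using lspan_sub ZX by blast
  have S_ge: "le th s" if "s \<in> S" for s
    using that[unfolded S_def]
  proof (induction rule: lspan.induct)
    case zero then show ?case using refl th_in by blast
  next
    case (base h) then show ?case using c_ge G'X Z_def by auto
  next
    case (plus x y)
    have xy: "x \<in> X" "y \<in> X" using plus.hyps SX S_def by auto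
    have "le (add th y) (add x y)" using mono_add plus.IH(1) xy th_in by blast
    hence "le y (add x y)" using idl xy by simp
    thus ?case using trans plus.IH(2) th_in xy add_in by blast
  next
    case (scale x a)
    have "x \<in> X" using scale.hyps SX S_def by auto
    hence "le (smult a th) (smult a x)" using mono_sm scale.IH th_in by blast
    moreover have "smult a th = th" using sm_th_iff th_in by blast
    ultimately show ?case by simp
  qed
  have S_nz: "s = th \<or> (\<exists>a z. a \<noteq> 0 \<and> z \<in> Z \<and> le (smult a z) s)" if "s \<in> S" for s
    using that[unfolded S_def]
  proof (induction rule: lspan.induct)
    case zero then show ?case by blast
  next
    case (base h)
    then have "h \<in> X" using ZX by blast
    then show ?case using base sm_one refl by (metis one_neq_zero)
  next
    case (plus x y)
    have xy: "x \<in> X" "y \<in> X" using plus.hyps SX S_def by auto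
    show ?case
    proof (cases "x = th")
      case True then show ?thesis using plus.IH(2) idl xy by simp
    next
      case False
      then obtain a z where az: "a \<noteq> 0" "z \<in> Z" "le (smult a z) x" using plus.IH(1) by blast
      have zX: "smult a z \<in> X" using az ZX sm_in by blast
      have 1: "le (add (smult a z) y) (add x y)" using mono_add az zX xy by blast
      have "le (add th (smult a z)) (add y (smult a z))"
        using mono_add S_ge[of y] plus.hyps(2) S_def zX th_in xy by blast
      hence 2: "le (smult a z) (add (smult a z) y)" using idl comm zX xy by simp
      have "le (smult a z) (add x y)" using trans[OF zX _ _ 2 1] add_in zX xy by blast
      then show ?thesis using az by blast
    qed
  next
    case (scale x b)
    have xX: "x \<in> X" using scale.hyps SX S_def by auto
    show ?case
    proof (cases "b = 0 \<or> x = th")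
      case True then show ?thesis using sm_th_iff xX by blast
    next
      case False
      then obtain a z where az: "a \<noteq> 0" "z \<in> Z" "le (smult a z) x" using scale.IH by blast
      have "le (smult b (smult a z)) (smult b x)" using mono_sm az xX ZX sm_in by blast
      hence "le (smult (b * a) z) (smult b x)" using sm_sm az ZX by auto
      moreover have "b * a \<noteq> 0" using False az by simp
      ultimately show ?thesis using az by blast
    qed
  qed
  have thV: "th \<in> V" unfolding V_def by (rule lspan.zero)
  have thS: "th \<in> S" unfolding S_def by (rule lspan.zero)
  have YX: "Y \<subseteq> X" unfolding Y_def using SX VX add_in by blast
  have SY: "S \<subseteq> Y"
  proof
    fix s assume "s \<in> S" then have "s = add s th" "s \<in> X" using idr SX by auto
    then show "s \<in> Y" unfolding Y_def using \<open>s \<in> S\<close> thV by blast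
  qed
  have VY: "V \<subseteq> Y"
  proof
    fix v assume "v \<in> V" then have "v = add th v" "v \<in> X" using idl VX by auto
    then show "v \<in> Y" unfolding Y_def using \<open>v \<in> V\<close> thS by blast
  qed
  have Y_ge: "le v (add s v)" if "s \<in> S" "v \<in> V" for s v
  proof -
    have "le (add th v) (add s v)" using mono_add S_ge that SX VX th_in by blast
    thus ?thesis using idl that VX by auto
  qed
  have primY: "prim Y le = V"
  proof
    show "V \<subseteq> prim Y le"
    proof
      fix v assume v: "v \<in> V"
      have "\<forall>y\<in>Y - {v}. \<not> le y v" using minimal VP v YX by blast
      then show "v \<in> prim Y le" unfolding prim_def using v VY by blast
    qed
  next
    show "prim Y le \<subseteq> V"
    proof
      fix y assume y: "y \<in> prim Y le"
      then obtain s v where sv: "y = add s v" "s \<in> S" "v \<in> V" unfolding prim_def Y_def by blast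
      have "le v y" using Y_ge sv by blast
      moreover have "v \<in> Y" using VY sv by blast
      ultimately have "v = y" using y unfolding prim_def by blast
      then show "y \<in> V" using sv by blast
    qed
  qed
  have addY: "add x y \<in> Y" if xyY: "x \<in> Y" "y \<in> Y" for x y
  proof -
    obtain s1 v1 where h1: "x = add s1 v1" "s1 \<in> S" "v1 \<in> V"
      using xyY(1) unfolding Y_def by blast
    obtain s2 v2 where h2: "y = add s2 v2" "s2 \<in> S" "v2 \<in> V"
      using xyY(2) unfolding Y_def by blast
    note h = h1 h2
    have X4: "s1 \<in> X" "v1 \<in> X" "s2 \<in> X" "v2 \<in> X" using h SX VX by auto
    have "add x y = add (add s1 s2) (add v1 v2)" unfolding h(1,4) by (rule sw4[OF X4])
    moreover have "add s1 s2 \<in> S" "add v1 v2 \<in> V" using h unfolding S_def V_def by (auto intro: lspan.plus)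
    ultimately show ?thesis unfolding Y_def by blast
  qed
  have smY: "smult a x \<in> Y" if xY: "x \<in> Y" for a x
  proof -
    obtain s v where h: "x = add s v" "s \<in> S" "v \<in> V" using xY unfolding Y_def by blast
    have X2: "s \<in> X" "v \<in> X" using h SX VX by auto
    have "smult a x = add (smult a s) (smult a v)" unfolding h(1) by (rule sm_add[OF X2])
    moreover have "smult a s \<in> S" "smult a v \<in> V" using h unfolding S_def V_def by (auto intro: lspan.scale)
    ultimately show ?thesis unfolding Y_def by blast
  qed
  have A5Y: "add x (smult (-1) x) = th \<longleftrightarrow> x \<in> prim Y le" if xY: "x \<in> Y" for x
  proof
    assume "add x (smult (-1) x) = th"
    then have xP: "x \<in> ?P" using A5 YX xY by blast
    obtain s v where h: "x = add s v" "s \<in> S" "v \<in> V" using xY unfolding Y_def by blast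
    have "le v x" using Y_ge h by blast
    then have "v = x" using minimal xP VX h by blast
    then show "x \<in> prim Y le" using primY h by blast
  next
    assume "x \<in> prim Y le"
    then show "add x (smult (-1) x) = th" using primY VP neg_cancel by blast
  qed
  have A6Y: "\<exists>p\<in>prim Y le. le p x" if xY: "x \<in> Y" for x
  proof -
    obtain s v where h: "x = add s v" "s \<in> S" "v \<in> V" using xY unfolding Y_def by blast
    then show ?thesis using Y_ge primY by blast
  qed
  have evsY: "evs Y le add smult th"
    by (rule sub_evs[OF YX SY[THEN subsetD, OF thS] addY smY A5Y A6Y])
  have Z_notP: "z \<notin> ?P" if zZ: "z \<in> Z" for z
  proof
    assume zP: "z \<in> ?P"
    obtain g where g: "g \<in> G'" "z = c g" using zZ Z_def by blast
    have "g = add z (q g)" using c_back g G'X by auto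
    moreover have "q g \<in> ?P" using q g G'X by blast
    ultimately have "g \<in> ?P" using prim_add zP by metis
    then show False using g GB BX by blast
  qed
  have indep: "x \<notin> Lset X le add smult y" if "x \<in> B" "y \<in> B" "x \<noteq> y" for x y
    using OB that unfolding orderly_basis_def by blast
  have OBY: "orderly_basis Y le add smult Z"
    unfolding orderly_basis_def primY
  proof (intro conjI)
    show "Z \<subseteq> Y - V"
    proof
      fix z assume zZ: "z \<in> Z"
      have "z \<in> S" unfolding S_def using zZ by (rule lspan.base)
      then have "z \<in> Y" using SY by blast
      moreover have "z \<notin> V" using Z_notP[OF zZ] VP by blast
      ultimately show "z \<in> Y - V" by blast
    qed
    show "Y - V = (\<Union>b\<in>Z. Lset Y le add smult b)"
    proof
      show "Y - V \<subseteq> (\<Union>b\<in>Z. Lset Y le add smult b)"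
      proof
        fix w assume w: "w \<in> Y - V"
        obtain s v where h: "w = add s v" "s \<in> S" "v \<in> V" using w unfolding Y_def by blast
        have "s \<noteq> th"
        proof
          assume "s = th"
          then have "w = v" using h(1) idl[of v] h(3) VX by auto
          then show False using w h(3) by blast
        qed
        then obtain a z where az: "a \<noteq> 0" "z \<in> Z" "le (smult a z) s" using S_nz h by blast
        have zX: "z \<in> X" using az ZX by blast
        have sX: "s \<in> X" using h SX by blast
        have vX: "v \<in> X" using h VX by blast
        have "le (add (smult a z) v) (add s v)" by (rule mono_add[OF sm_in[OF zX] sX vX az(3)])
        then have le1: "le (add (smult a z) v) w" using h(1) by simp
        have wY: "w \<in> Y" using w by blast
        show "w \<in> (\<Union>b\<in>Z. Lset Y le add smult b)"
        proof
          show "z \<in> Z" by (rule az(2))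
          show "w \<in> Lset Y le add smult z" unfolding Lset_def primY
            using wY az(1) h(3) le1 by blast
        qed
      qed
    next
      show "(\<Union>b\<in>Z. Lset Y le add smult b) \<subseteq> Y - V"
      proof
        fix w assume "w \<in> (\<Union>b\<in>Z. Lset Y le add smult b)"
        then obtain z a p where h: "z \<in> Z" "w \<in> Y" "a \<noteq> 0" "p \<in> V" "le (add (smult a z) p) w"
          unfolding Lset_def primY by blast
        have zX: "z \<in> X" and pX: "p \<in> X" using h ZX VX by auto
        have azpX: "add (smult a z) p \<in> X" using zX pX sm_in add_in by blast
        show "w \<in> Y - V"
        proof
          show "w \<in> Y" by fact
          show "w \<notin> V"
          proof
            assume "w \<in> V"
            have wP: "w \<in> ?P" using \<open>w \<in> V\<close> VP by blast
            have "add (smult a z) p = w" by (rule minimal[OF wP azpX h(5)])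
            then have azp: "add (smult a z) p \<in> ?P" using \<open>w \<in> V\<close> VP by blast
            have pP: "p \<in> ?P" using h VP by blast
            have "add (add (smult a z) p) (smult (-1) p) = add (smult a z) (add p (smult (-1) p))"
              by (rule assoc[OF sm_in[OF zX] pX sm_in[OF pX]])
            also have "\<dots> = smult a z" using neg_cancel[OF pP] idr[OF sm_in[OF zX]] by simp
            finally have "add (add (smult a z) p) (smult (-1) p) = smult a z" .
            then have "smult a z \<in> ?P" using prim_add[OF azp prim_sm[OF pP, of "-1"]] by simp
            then have "smult (inverse a) (smult a z) \<in> ?P" by (rule prim_sm)
            then have "z \<in> ?P" using sm_sm zX sm_one h(3) by simp
            then show False using Z_notP h by blast
          qed
        qed
      qed
    qed
    show "\<forall>x\<in>Z. \<forall>y\<in>Z. x \<noteq> y \<longrightarrow> x \<notin> Lset Y le add smult y \<and> y \<notin> Lset Y le add smult x"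
    proof -
      have key: "x \<notin> Lset Y le add smult y" if xyZ: "x \<in> Z" "y \<in> Z" "x \<noteq> y" for x y
      proof
        assume "x \<in> Lset Y le add smult y"
        then obtain a p where ap: "a \<noteq> 0" "p \<in> V" "le (add (smult a y) p) x"
          unfolding Lset_def primY by blast
        obtain g1 g2 where g: "g1 \<in> G'" "x = c g1" "g2 \<in> G'" "y = c g2" using xyZ Z_def by blast
        have gX: "g1 \<in> X" "g2 \<in> X" using g G'X by auto
        have ne: "g1 \<noteq> g2" using g xyZ by blast
        have pX: "p \<in> X" using ap VX by blast
        define r where "r = add (add (smult a (smult (-1) (q g2))) p) (q g1)"
        have pP: "p \<in> ?P" using ap(2) VP by blast
        have rP: "r \<in> ?P" unfolding r_def
          by (rule prim_add[OF prim_add[OF prim_sm[OF prim_sm[OF q(1)[OF gX(2)]]] pP] q(1)[OF gX(1)]])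
        have yX: "y \<in> X" "x \<in> X" using xyZ ZX by auto
        have "le (add (add (smult a y) p) (q g1)) (add x (q g1))"
          by (rule mono_add[OF add_in[OF sm_in[OF yX(1)] pX] yX(2) qX[OF gX(1)] ap(3)])
        moreover have "add x (q g1) = g1" using c_back gX g by simp
        moreover have "add (add (smult a y) p) (q g1) = add (smult a g2) r"
        proof -
          let ?A = "smult a g2" and ?B = "smult a (smult (-1) (q g2))" and ?q = "q g1"
          have AX: "?A \<in> X" and BX': "?B \<in> X" and qX1: "?q \<in> X"
            using gX qX sm_in by auto
          have "smult a y = add ?A ?B" unfolding g(4) c_def by (rule sm_add[OF gX(2) sm_in[OF qX[OF gX(2)]]])
          hence "add (add (smult a y) p) ?q = add (add (add ?A ?B) p) ?q" by simp
          also have "\<dots> = add (add ?A (add ?B p)) ?q" using assoc[OF AX BX' pX] by simp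
          also have "\<dots> = add ?A (add (add ?B p) ?q)" by (rule assoc[OF AX add_in[OF BX' pX] qX1])
          finally show ?thesis unfolding r_def .
        qed
        ultimately have "le (add (smult a g2) r) g1" by simp
        then have "g1 \<in> Lset X le add smult g2" unfolding Lset_def using ap rP gX by blast
        then show False using indep g ne GB by blast
      qed
      show ?thesis using key by blast
    qed
  qed
  have injc: "inj_on c G'"
  proof
    fix g1 g2 assume g: "g1 \<in> G'" "g2 \<in> G'" "c g1 = c g2"
    show "g1 = g2"
    proof (rule ccontr)
      assume ne: "g1 \<noteq> g2"
      have gX: "g1 \<in> X" "g2 \<in> X" using g G'X by auto
      define r where "r = add (smult (-1) (q g2)) (q g1)"
      have rP: "r \<in> ?P" unfolding r_def
        by (rule prim_add[OF prim_sm[OF q(1)[OF gX(2)]] q(1)[OF gX(1)]])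
      have "g1 = add (c g1) (q g1)" using c_back[OF gX(1)] by simp
      also have "\<dots> = add (c g2) (q g1)" using g(3) by simp
      also have "\<dots> = add g2 r" unfolding c_def r_def
        by (rule assoc[OF gX(2) sm_in[OF qX[OF gX(2)]] qX[OF gX(1)]])
      also have "\<dots> = add (smult 1 g2) r" using sm_one[OF gX(2)] by simp
      finally have eq: "g1 = add (smult 1 g2) r" .
      have le1: "le (add (smult 1 g2) r) g1" using refl[OF gX(1)] eq by simp
      have "(1::'k) \<noteq> 0" by simp
      then have "g1 \<in> Lset X le add smult g2" unfolding Lset_def using rP gX(1) le1 by blast
      then show False using indep g ne GB by blast
    qed
  qed
  have "G' \<approx> Z" unfolding Z_def eqpoll_def using inj_on_imp_bij_betw[OF injc] by blast
  then have ZG: "Z \<approx> G'" by (rule eqpoll_sym)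
  have HBY: "hamel_basis (prim Y le) add smult th D'"
    unfolding hamel_basis_def primY
  proof (intro conjI ballI)
    show "D' \<subseteq> V" unfolding V_def by (auto intro: lspan.base)
    show "lspan add smult th D' = V" unfolding V_def ..
    fix h assume "h \<in> D'"
    have "D' - {h} \<subseteq> H - {h}" using DH by blast
    then have "lspan add smult th (D' - {h}) \<subseteq> lspan add smult th (H - {h})"
      by (rule lspan_mono)
    moreover have "h \<notin> lspan add smult th (H - {h})" using HB \<open>h \<in> D'\<close> DH unfolding hamel_basis_def by blast
    ultimately show "h \<notin> lspan add smult th (D' - {h})" by blast
  qed
  have "subevs Y X le add smult" unfolding subevs_def using YX evsY by blast
  then show ?thesis using OBY ZG HBY by blast
qed

end


theorem mainTheorem9:
  fixes X :: "'x set" and le :: "'x \<Rightarrow> 'x \<Rightarrow> bool" and add :: "'x \<Rightarrow> 'x \<Rightarrow> 'x"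
    and smult :: "'k::field \<Rightarrow> 'x \<Rightarrow> 'x" and th :: 'x
    and B H :: "'x set" and G :: "'g set" and D :: "'d set"
  assumes "evs X le add smult th"
    and "orderly_basis X le add smult B"
    and "hamel_basis (prim X le) add smult th H"
    and "G \<lesssim> B" and "D \<lesssim> H"
  shows "\<exists>Y. subevs Y X le add smult \<and>
           (\<exists>B' H'. orderly_basis Y le add smult B' \<and> B' \<approx> G \<and>
                    hamel_basis (prim Y le) add smult th H' \<and> H' \<approx> D)"
proof -
  interpret evsL X le add smult th by (rule evsL.intro) (rule assms(1))
  obtain f where f: "inj_on f G" "f ` G \<subseteq> B" using assms(4) unfolding lepoll_def by blast
  obtain h where h: "inj_on h D" "h ` D \<subseteq> H" using assms(5) unfolding lepoll_def by blast
  obtain Y B' where Y: "subevs Y X le add smult" "orderly_basis Y le add smult B'" "B' \<approx> f ` G"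
      "hamel_basis (prim Y le) add smult th (h ` D)"
    using construct[OF assms(2) assms(3) f(2) h(2)] by blast
  have "G \<approx> f ` G" unfolding eqpoll_def using inj_on_imp_bij_betw[OF f(1)] by blast
  then have BG: "B' \<approx> G" using Y(3) eqpoll_trans eqpoll_sym by blast
  have "D \<approx> h ` D" unfolding eqpoll_def using inj_on_imp_bij_betw[OF h(1)] by blast
  then have HD: "h ` D \<approx> D" by (rule eqpoll_sym)
  show ?thesis using Y(1,2,4) BG HD by blast
qed

end
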